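(* Let $n\ge3$. The elements of $R$ whose binary representation has length $2n+7$ and begins with $100100$ are exactly $[100100(10)^{n-1}010]_2$ and $[100100(10)^n0]_2$.
   Context: Stern's sequence $(a(n))_{n\ge0}$: $a(0)=0$, $a(1)=1$, $a(2n)=a(n)$, $a(2n+1)=a(n)+a(n+1)$; $s(n)=a(n+1)$. $R$ is the set of record-setters of $s$, i.e. indices $v\ge0$ with $s(i)<s(v)$ for all $i<v$. Binary representations have no leading zeros. For a binary string $x$, $[x]_2$ is the integer it represents in base 2; $x^i$ denotes $i$-fold concatenation. *)

theory Defs
  imports Main
begin

function stern :: "nat \<Rightarrow> nat" where
  "stern 0 = 0"
| "stern (Suc 0) = 1"
| "stern (Suc (Suc m)) = (let n = Suc (Suc m) in
     if even n then stern (n div 2) else stern (n div 2) + stern (n div 2 + 1))"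
  by pat_completeness auto
termination by (relation "measure id") (auto elim: oddE)

definition s :: "nat \<Rightarrow> nat" where
  "s n = stern (n + 1)"

definition R :: "nat set" where
  "R = {v. \<forall>i<v. s i < s v}"

text \<open>Binary strings as lists of bits (True = 1), most significant bit first.\<close>
fun bin_val :: "bool list \<Rightarrow> nat" where
  "bin_val [] = 0"
| "bin_val xs = 2 * bin_val (butlast xs) + (if last xs then 1 else 0)"

fun bin_rep :: "nat \<Rightarrow> bool list" where
  "bin_rep 0 = []"
| "bin_rep n = bin_rep (n div 2) @ [odd n]"

definition pow_str :: "bool list \<Rightarrow> nat \<Rightarrow> bool list" where
  "pow_str x i = concat (replicate i x)"

end

theory Submission
  imports Defs
begin


lemma stern_even: "stern (2*m) = stern m"
proof (cases m)
  case 0 then show ?thesis by simp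
next
  case (Suc k)
  then have "2*m = Suc (Suc (2*k))" by simp
  then show ?thesis using Suc by (simp add: Let_def)
qed

lemma stern_odd: "stern (2*m+1) = stern m + stern (m+1)"
proof (cases m)
  case 0 then show ?thesis by simp
next
  case (Suc k)
  then have "2*m+1 = Suc (Suc (2*k+1))" by simp
  then show ?thesis using Suc by (simp add: Let_def)
qed

fun step :: "bool \<Rightarrow> nat \<times> nat \<Rightarrow> nat \<times> nat" where
  "step b (x,y) = (if b then (x+y,y) else (x,x+y))"

definition st :: "bool list \<Rightarrow> nat \<times> nat \<Rightarrow> nat \<times> nat" where
  "st xs p = foldl (\<lambda>q b. step b q) p xs"

lemma st_Nil[simp]: "st [] p = p" by (simp add: st_def)
lemma st_Cons[simp]: "st (b#xs) p = st xs (step b p)" by (simp add: st_def)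
lemma st_append[simp]: "st (xs@ys) p = st ys (st xs p)" by (simp add: st_def)

lemma bin_val_snoc[simp]: "bin_val (xs@[b]) = 2 * bin_val xs + (if b then 1 else 0)"
proof -
  obtain c cs where h: "xs@[b] = c#cs" by (cases "xs@[b]") auto
  have "bin_val (c#cs) = 2 * bin_val (butlast (c#cs)) + (if last (c#cs) then 1 else 0)"
    by (rule bin_val.simps(2))
  then show ?thesis unfolding h[symmetric] by simp
qed

declare bin_val.simps(2)[simp del]

lemma st_pair: "st xs (0,1) = (stern (bin_val xs), stern (bin_val xs + 1))"
proof (induction xs rule: rev_induct)
  case Nil then show ?case by simp
next
  case (snoc b xs)
  have e: "stern (2 * bin_val xs + 2) = stern (bin_val xs + 1)"
    using stern_even[of "bin_val xs + 1"] by (simp add: algebra_simps)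
  show ?case using snoc stern_even[of "bin_val xs"] stern_odd[of "bin_val xs"] e
    by (auto simp: add.commute)
qed



lemma bin_val_Nil[simp]: "bin_val [] = 0" by simp

lemma bin_val_append: "bin_val (xs@ys) = bin_val xs * 2^length ys + bin_val ys"
proof (induction ys rule: rev_induct)
  case Nil then show ?case by simp
next
  case (snoc b ys)
  have "bin_val (xs @ ys @ [b]) = bin_val ((xs @ ys) @ [b])" by simp
  also have "\<dots> = 2 * bin_val (xs@ys) + (if b then 1 else 0)" by (rule bin_val_snoc)
  finally show ?case using snoc by (simp add: algebra_simps)
qed

lemma bin_val_less: "bin_val xs < 2^length xs"
proof (induction xs rule: rev_induct)
  case Nil then show ?case by simp
next
  case (snoc b ys) then show ?case by auto
qed

lemma bin_val_Cons: "bin_val (b#xs) = (if b then 2^length xs else 0) + bin_val xs"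
  using bin_val_append[of "[b]" xs] bin_val_snoc[of "[]" b] by simp

definition ltl :: "bool list \<Rightarrow> bool list \<Rightarrow> bool" where
  "ltl xs ys \<longleftrightarrow> (\<exists>p r1 r2. xs = p@False#r1 \<and> ys = p@True#r2)"

lemma ltl_Nil_right[simp]: "\<not> ltl xs []" by (auto simp: ltl_def)
lemma ltl_Nil_left[simp]: "\<not> ltl [] xs" by (auto simp: ltl_def)

lemma ltl_Cons_Cons: "ltl (a#xs) (b#ys) \<longleftrightarrow> (\<not>a \<and> b) \<or> (a = b \<and> ltl xs ys)"
proof
  assume "ltl (a#xs) (b#ys)"
  then obtain p r1 r2 where h: "a#xs = p@False#r1" "b#ys = p@True#r2" by (auto simp: ltl_def)
  show "(\<not>a \<and> b) \<or> (a = b \<and> ltl xs ys)"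
  proof (cases p)
    case Nil then show ?thesis using h by auto
  next
    case (Cons c q) then show ?thesis using h by (auto simp: ltl_def)
  qed
next
  assume "(\<not>a \<and> b) \<or> (a = b \<and> ltl xs ys)"
  then show "ltl (a#xs) (b#ys)"
  proof
    assume "\<not>a \<and> b" then show ?thesis unfolding ltl_def by (rule_tac x="[]" in exI) auto
  next
    assume "a = b \<and> ltl xs ys"
    then obtain p r1 r2 where "xs = p@False#r1" "ys = p@True#r2" "a = b" by (auto simp: ltl_def)
    then show ?thesis unfolding ltl_def by (rule_tac x="a#p" in exI) auto
  qed
qed

lemma ltl_Cons_right: "ltl xs (b#ys) \<longleftrightarrow> (b \<and> (\<exists>r. xs = False#r)) \<or> (\<exists>xs'. xs = b#xs' \<and> ltl xs' ys)"
  by (cases xs) (auto simp: ltl_Cons_Cons)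

lemma ltl_Cons_left: "ltl (a#xs) ys \<longleftrightarrow> (\<not>a \<and> (\<exists>r. ys = True#r)) \<or> (\<exists>ys'. ys = a#ys' \<and> ltl xs ys')"
  by (cases ys) (auto simp: ltl_Cons_Cons)

lemma ltl_append_same: "ltl (u@xs) (u@ys) \<longleftrightarrow> ltl xs ys"
  by (induction u) (auto simp: ltl_Cons_Cons)

lemma ltl_trich: "length xs = length ys \<Longrightarrow> xs = ys \<or> ltl xs ys \<or> ltl ys xs"
  by (induction xs ys rule: list_induct2) (auto simp: ltl_Cons_Cons)

lemma ltl_less: assumes "ltl xs ys" "length xs = length ys" shows "bin_val xs < bin_val ys"
proof -
  obtain p r1 r2 where h: "xs = p@False#r1" "ys = p@True#r2" using assms by (auto simp: ltl_def)
  then have l: "length r1 = length r2" using assms by simp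
  have 1: "bin_val (False#r1) = bin_val r1" by (simp add: bin_val_Cons)
  have 2: "bin_val (True#r2) = 2^length r2 + bin_val r2" by (simp add: bin_val_Cons)
  have "bin_val (False#r1) < bin_val (True#r2)" using bin_val_less[of r1] l 1 2 by simp
  then have "bin_val p * 2 ^ length (False#r1) + bin_val (False#r1) < bin_val p * 2 ^ length (True#r2) + bin_val (True#r2)"
    using l by simp
  then show ?thesis unfolding h bin_val_append .
qed

lemma less_ltl: assumes "bin_val xs < bin_val ys" "length xs = length ys" shows "ltl xs ys"
proof -
  have "xs = ys \<or> ltl xs ys \<or> ltl ys xs" using ltl_trich[OF assms(2)] .
  moreover have "\<not> ltl ys xs" using ltl_less[of ys xs] assms by auto
  moreover have "xs \<noteq> ys" using assms by auto
  ultimately show ?thesis by blast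
qed

lemma exists_list: "i < 2^L \<Longrightarrow> \<exists>xs. length xs = L \<and> bin_val xs = i"
proof (induction L arbitrary: i)
  case 0 then show ?case by simp
next
  case (Suc L)
  then have "i div 2 < 2^L" by simp
  then obtain xs where h: "length xs = L" "bin_val xs = i div 2" using Suc.IH by blast
  have "bin_val (xs@[odd i]) = i" using h(2) by simp
  then show ?case using h(1) by (intro exI[of _ "xs@[odd i]"]) simp
qed

lemma bin_val_rep: "bin_val (bin_rep v) = v"
  by (induction v rule: bin_rep.induct) auto

lemma bin_val_True_pos: "bin_val (True#xs) > 0"
  by (simp add: bin_val_Cons)

lemma bin_rep_val: "bin_rep (bin_val (True#xs)) = True#xs"
proof (induction xs rule: rev_induct)
  case Nil
  have "bin_val [True] = 1" using bin_val_snoc[of "[]" True] by simp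
  then show ?case by simp
next
  case (snoc b xs)
  let ?m = "bin_val (True#xs)"
  have pos: "?m > 0" by (rule bin_val_True_pos)
  have e: "bin_val (True#xs@[b]) = 2*?m + (if b then 1 else 0)"
    using bin_val_snoc[of "True#xs" b] by simp
  have "2*?m + (if b then 1 else 0) \<noteq> 0" using pos by simp
  then obtain k where k: "2*?m + (if b then 1 else 0) = Suc k" using not0_implies_Suc by blast
  have "bin_rep (Suc k) = bin_rep (Suc k div 2) @ [odd (Suc k)]" by simp
  moreover have "Suc k div 2 = ?m" using k by (cases b) auto
  moreover have "odd (Suc k) = b" using k by (cases b) (auto, presburger+)
  ultimately show ?case using e k snoc by simp
qed



fun fb :: "nat \<Rightarrow> nat" where
  "fb 0 = 0" | "fb (Suc 0) = 1" | "fb (Suc (Suc n)) = fb (Suc n) + fb n"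

lemma fb_mono: "fb n \<le> fb (Suc n)"
  by (cases n) auto

declare fb.simps(3)[simp del]

lemma fb_rec: "fb (n+2) = fb (n+1) + fb n"
  using fb.simps(3)[of n] by simp

lemma G_bound: "length w = k \<Longrightarrow>
   snd (st w (x,y)) \<le> max (fb k * x + fb (Suc k) * y) (fb (Suc k) * x + fb k * y)"
proof (induction w arbitrary: x y k)
  case Nil then show ?case by simp
next
  case (Cons b w)
  then obtain k' where k: "k = Suc k'" "length w = k'" by auto
  have m: "fb k' \<le> fb (Suc k')" by (rule fb_mono)
  have r: "fb (Suc (Suc k')) = fb (Suc k') + fb k'" by (rule fb.simps(3))
  have m1: "fb k' * y \<le> fb (Suc k') * y" using m by simp
  have m2: "fb k' * x \<le> fb (Suc k') * x" using m by simp
  show ?case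
  proof (cases b)
    case True
    then have "snd (st (b#w) (x,y)) = snd (st w (x+y,y))" by simp
    also have "\<dots> \<le> max (fb k' * (x+y) + fb (Suc k') * y) (fb (Suc k') * (x+y) + fb k' * y)"
      using Cons.IH k by blast
    also have "\<dots> \<le> max (fb k * x + fb (Suc k) * y) (fb (Suc k) * x + fb k * y)"
      using m1 m2 k r by (simp add: algebra_simps)
    finally show ?thesis .
  next
    case False
    then have "snd (st (b#w) (x,y)) = snd (st w (x,x+y))" by simp
    also have "\<dots> \<le> max (fb k' * x + fb (Suc k') * (x+y)) (fb (Suc k') * x + fb k' * (x+y))"
      using Cons.IH k by blast
    also have "\<dots> \<le> max (fb k * x + fb (Suc k) * y) (fb (Suc k) * x + fb k * y)"
      using m1 m2 k r by (simp add: algebra_simps)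
    finally show ?thesis .
  qed
qed

lemma pow_str_0[simp]: "pow_str xs 0 = []" by (simp add: pow_str_def)
lemma pow_str_Suc[simp]: "pow_str xs (Suc m) = xs @ pow_str xs m" by (simp add: pow_str_def)
lemma length_pow_str[simp]: "length (pow_str xs m) = m * length xs"
  by (induction m) auto

fun Pf :: "nat \<times> nat \<Rightarrow> nat \<times> nat" where "Pf (x,y) = (x+y, x+2*y)"

lemma st_pow: "st (pow_str [True,False] m) p = (Pf^^m) p"
proof (induction m arbitrary: p)
  case 0 then show ?case by simp
next
  case (Suc m)
  obtain x y where p: "p = (x,y)" by (cases p)
  have "st (pow_str [True,False] (Suc m)) p = st (pow_str [True,False] m) (Pf p)"
    using p by (simp add: mult_2 add.assoc)
  also have "\<dots> = (Pf^^m) (Pf p)" by (rule Suc.IH)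
  also have "\<dots> = (Pf^^Suc m) p" by (simp only: funpow_Suc_right comp_def)
  finally show ?case .
qed

lemma fib_arith1: "C = B + A \<Longrightarrow> D = C + B \<Longrightarrow> E = D + C \<Longrightarrow>
  (A*(x+y) + B*(x+2*y), B*(x+y)+C*(x+2*y)) = (C*x + D*y, D*x + (E::nat)*y)"
  by (simp add: algebra_simps)

lemma Pf_closed: "(Pf^^(Suc j)) (x,y) =
  (fb (2*j+1) * x + fb (2*j+2) * y, fb (2*j+2) * x + fb (2*j+3) * y)"
proof (induction j arbitrary: x y)
  case 0 then show ?case by (simp add: numeral_eq_Suc fb.simps(3))
next
  case (Suc j)
  have "(Pf^^(Suc (Suc j))) (x,y) = (Pf^^(Suc j)) (Pf (x,y))" by (simp only: funpow_Suc_right comp_def)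
  also have "\<dots> = (Pf^^(Suc j)) (x+y, x+2*y)" by simp
  also have "\<dots> = (fb (2*j+1) * (x+y) + fb (2*j+2) * (x+2*y), fb (2*j+2) * (x+y) + fb (2*j+3) * (x+2*y))"
    by (rule Suc.IH)
  also have "\<dots> = (fb (2*j+3) * x + fb (2*j+4) * y, fb (2*j+4) * x + fb (2*j+5) * y)"
    by (rule fib_arith1) (simp_all add: fb.simps(3) eval_nat_numeral)
  also have "\<dots> = (fb (2*Suc j+1) * x + fb (2*Suc j+2) * y, fb (2*Suc j+2) * x + fb (2*Suc j+3) * y)"
  proof -
    have "2*Suc j+1 = 2*j+3" "2*Suc j + 2 = 2*j+4" "2*Suc j+3 = 2*j+5" by simp_all
    then show ?thesis by (simp only:)
  qed
  finally show ?case .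
qed

lemma tB_closed: "snd (st (pow_str [True,False] m @ [False]) (x,y)) = fb (2*m+1) * x + fb (2*m+2) * y"
proof (cases m)
  case 0 then show ?thesis by (simp add: numeral_eq_Suc fb.simps(3))
next
  case (Suc j)
  have "st (pow_str [True,False] m) (x,y) = (Pf^^(Suc j)) (x,y)" by (simp only: st_pow Suc)
  then have "snd (st (pow_str [True,False] m @ [False]) (x,y)) = snd (step False ((Pf^^(Suc j)) (x,y)))"
    by simp
  also have "\<dots> = fb (2*j+1) * x + fb (2*j+2) * y + (fb (2*j+2) * x + fb (2*j+3) * y)"
    unfolding Pf_closed by simp
  also have "\<dots> = fb (2*j+3) * x + fb (2*j+4) * y"
  proof -
    have "fb (2*j+3) = fb (2*j+2) + fb (2*j+1)" "fb (2*j+4) = fb (2*j+3) + fb (2*j+2)"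
      by (simp_all add: fb.simps(3) eval_nat_numeral)
    then show ?thesis by (simp add: algebra_simps)
  qed
  also have "\<dots> = fb (2*m+1) * x + fb (2*m+2) * y"
  proof -
    have "2*m+1 = 2*j+3" "2*m+2 = 2*j+4" using Suc by simp_all
    then show ?thesis by (simp only:)
  qed
  finally show ?thesis .
qed



lemma ar_S3: "(a::nat) \<le> b \<Longrightarrow> max (a*(x+y+y)+b*y) (b*(x+y+y)+a*y) \<le> (b+a)*x + ((b+a)+b)*y"
proof -
  assume "a \<le> b"
  then have h: "a*y \<le> b*y" "a*x \<le> b*x" by simp_all
  have e1: "a*(x+y+y)+b*y = a*x + a*y + a*y + b*y" by (simp add: algebra_simps)
  have e2: "(b+a)*x + ((b+a)+b)*y = b*x + a*x + b*y + a*y + b*y" by (simp add: algebra_simps)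
  have e3: "b*(x+y+y)+a*y = b*x+b*y+b*y+a*y" by (simp add: algebra_simps)
  have g1: "a*(x+y+y)+b*y \<le> (b+a)*x + ((b+a)+b)*y" unfolding e1 e2 using h by linarith
  have g2: "b*(x+y+y)+a*y \<le> (b+a)*x + ((b+a)+b)*y" unfolding e3 e2 using h by linarith
  show ?thesis using g1 g2 by simp
qed

lemma S3: "length w = 2*m+1 \<Longrightarrow> ltl (pow_str [True,False] m @ [False]) w \<Longrightarrow>
   snd (st w (x,y)) \<le> snd (st (pow_str [True,False] m @ [False]) (x,y))"
proof (induction m arbitrary: x y w)
  case 0
  then obtain r where "w = True#r" by (auto simp: ltl_Cons_left)
  then have "w = [True]" using 0 by simp
  then show ?case by simp
next
  case (Suc m)
  have t: "pow_str [True,False] (Suc m) @ [False] = True#False#(pow_str [True,False] m @ [False])" by simp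
  from Suc.prems(2) obtain w1 where w1: "w = True#w1" "ltl (False#(pow_str [True,False] m @ [False])) w1"
    unfolding t by (auto simp: ltl_Cons_left)
  from w1(2) have "(\<exists>r. w1 = True#r) \<or> (\<exists>w'. w1 = False#w' \<and> ltl (pow_str [True,False] m @ [False]) w')"
    by (auto simp: ltl_Cons_left)
  then show ?case
  proof
    assume "\<exists>r. w1 = True#r"
    then obtain r where r: "w = True#True#r" using w1 by auto
    have lr: "length r = 2*m+1" using r Suc.prems(1) by simp
    have "snd (st w (x,y)) = snd (st r (x+y+y, y))" using r by simp
    also have "\<dots> \<le> max (fb (2*m+1) * (x+y+y) + fb (Suc (2*m+1)) * y) (fb (Suc (2*m+1)) * (x+y+y) + fb (2*m+1) * y)"
      using G_bound[OF lr] by blast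
    also have "\<dots> \<le> (fb (2*m+2) + fb (2*m+1)) * x + ((fb (2*m+2) + fb (2*m+1)) + fb (2*m+2)) * y"
      using ar_S3[of "fb (2*m+1)" "fb (2*m+2)" x y] fb_mono[of "2*m+1"] by simp
    also have "\<dots> = snd (st (pow_str [True,False] (Suc m) @ [False]) (x,y))"
    proof -
      have e: "2*Suc m+1 = 2*m+3" "2*Suc m+2 = 2*m+4" by simp_all
      have f: "fb (2*m+3) = fb (2*m+2) + fb (2*m+1)" "fb (2*m+4) = fb (2*m+3) + fb (2*m+2)"
        by (simp_all add: fb.simps(3) eval_nat_numeral)
      show ?thesis unfolding tB_closed e f by simp
    qed
    finally show ?thesis .
  next
    assume "\<exists>w'. w1 = False#w' \<and> ltl (pow_str [True,False] m @ [False]) w'"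
    then obtain w' where w': "w = True#False#w'" "ltl (pow_str [True,False] m @ [False]) w'" using w1 by auto
    have "length w' = 2*m+1" using w' Suc.prems(1) by simp
    then have "snd (st w' (x+y, x+y+y)) \<le> snd (st (pow_str [True,False] m @ [False]) (x+y,x+y+y))"
      using Suc.IH w'(2) by blast
    then show ?thesis using w'(1) t by simp
  qed
qed

lemma ar_S1: "8*x \<le> 5*(y::nat) \<Longrightarrow>
  max ((3*a+5*b)*x + (5*a+8*b)*(x+y)) ((5*a+8*b)*x + (3*a+5*b)*(x+y)) \<le> 8*(a*x+b*y) + 5*(b*x+(a+b)*y)"
proof -
  assume h: "8*x \<le> 5*y"
  have "b*(8*x) \<le> b*(5*y)" using h by simp
  then show ?thesis by (simp add: algebra_simps)
qed

lemma S1: "8*x \<le> 5*y \<Longrightarrow> length w = 2*k+5 \<Longrightarrow> ltl w (pow_str [True,False] (Suc k) @ [False,True,False]) \<Longrightarrow>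
   snd (st w (x,y)) \<le> 8*fst((Pf^^k)(x,y)) + 5*snd((Pf^^k)(x,y))"
proof (induction k arbitrary: x y w)
  case 0
  have "ltl w [True,False,False,True,False]" using 0 by simp
  then have "(\<exists>r. w = False#r) \<or> (\<exists>r. w = True#False#False#False#r)"
    by (auto simp: ltl_Cons_right)
  then show ?case
  proof
    assume "\<exists>r. w = False#r"
    then obtain r where r: "w = False#r" by auto
    have lr: "length r = 4" using r 0 by simp
    have "snd (st w (x,y)) = snd (st r (x,x+y))" using r by simp
    also have "\<dots> \<le> max (fb 4 * x + fb (Suc 4) * (x+y)) (fb (Suc 4) * x + fb 4 * (x+y))"
      using G_bound[OF lr] by blast
    also have "\<dots> \<le> 8*x+5*y" by (simp add: fb.simps(3) eval_nat_numeral)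
    finally show ?thesis by simp
  next
    assume "\<exists>r. w = True#False#False#False#r"
    then obtain r where r: "w = True#False#False#False#r" by auto
    then obtain b where "r = [b]" using 0 by (cases r) auto
    then show ?thesis using r by (cases b) auto
  qed
next
  case (Suc k)
  have t: "pow_str [True,False] (Suc (Suc k)) @ [False,True,False] = True#False#(pow_str [True,False] (Suc k) @ [False,True,False])" by simp
  have "(\<exists>r. w = False#r) \<or> (\<exists>w'. w = True#False#w' \<and> ltl w' (pow_str [True,False] (Suc k) @ [False,True,False]))"
    using Suc.prems(3) unfolding t by (auto simp: ltl_Cons_right)
  then show ?case
  proof
    assume "\<exists>r. w = False#r"
    then obtain r where r: "w = False#r" by auto
    have lr: "length r = 2*k+6" using r Suc.prems(2) by simp
    have "snd (st w (x,y)) = snd (st r (x,x+y))" using r by simp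
    also have "\<dots> \<le> max (fb (2*k+6) * x + fb (Suc (2*k+6)) * (x+y)) (fb (Suc (2*k+6)) * x + fb (2*k+6) * (x+y))"
      using G_bound[OF lr] by blast
    also have "\<dots> = max ((3*fb (2*k+1)+5*fb (2*k+2))*x + (5*fb (2*k+1)+8*fb (2*k+2))*(x+y))
                        ((5*fb (2*k+1)+8*fb (2*k+2))*x + (3*fb (2*k+1)+5*fb (2*k+2))*(x+y))"
    proof -
      have "fb (2*k+6) = 3*fb (2*k+1)+5*fb (2*k+2)" "fb (Suc (2*k+6)) = 5*fb (2*k+1)+8*fb (2*k+2)"
        by (simp_all add: fb.simps(3) eval_nat_numeral)
      then show ?thesis by (simp only:)
    qed
    also have "\<dots> \<le> 8*(fb (2*k+1)*x+fb (2*k+2)*y) + 5*(fb (2*k+2)*x+(fb (2*k+1)+fb (2*k+2))*y)"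
      by (rule ar_S1[OF Suc.prems(1)])
    also have "\<dots> = 8*fst((Pf^^Suc k)(x,y)) + 5*snd((Pf^^Suc k)(x,y))"
    proof -
      have "fb (2*k+3) = fb (2*k+1)+fb (2*k+2)" by (simp_all add: fb.simps(3) eval_nat_numeral)
      then show ?thesis unfolding Pf_closed by simp
    qed
    finally show ?thesis .
  next
    assume "\<exists>w'. w = True#False#w' \<and> ltl w' (pow_str [True,False] (Suc k) @ [False,True,False])"
    then obtain w' where w': "w = True#False#w'" "ltl w' (pow_str [True,False] (Suc k) @ [False,True,False])" by auto
    have l: "length w' = 2*k+5" using w' Suc.prems(2) by simp
    have i: "8*(x+y) \<le> 5*(x+y+y)" using Suc.prems(1) by simp
    have "snd (st w' (x+y,x+y+y)) \<le> 8*fst((Pf^^k)(x+y,x+y+y)) + 5*snd((Pf^^k)(x+y,x+y+y))"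
      using Suc.IH[OF i l w'(2)] .
    moreover have "(Pf^^Suc k)(x,y) = (Pf^^k)(x+y,x+y+y)"
      by (simp only: funpow_Suc_right comp_def Pf.simps mult_2 add.assoc)
    ultimately show ?thesis using w'(1) by simp
  qed
qed

lemma S2dec: "length w = 2*m+3 \<Longrightarrow> ltl w (pow_str [True,False] (Suc m) @ [False]) \<Longrightarrow>
   w = pow_str [True,False] m @ [False,True,False] \<or> ltl w (pow_str [True,False] m @ [False,True,False])
   \<or> w = pow_str [True,False] m @ [False,True,True]"
proof (induction m arbitrary: w)
  case 0
  then have "ltl w [True,False,False]" by simp
  then obtain r where r: "w = False#r" by (auto simp: ltl_Cons_right)
  then obtain a b where "r = [a,b]" using 0 by (cases r; cases "tl r") auto
  then show ?case using r by (cases a; cases b) (auto simp: ltl_Cons_Cons)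
next
  case (Suc m)
  have t: "pow_str [True,False] (Suc (Suc m)) @ [False] = True#False#(pow_str [True,False] (Suc m) @ [False])" by simp
  have "(\<exists>r. w = False#r) \<or> (\<exists>w'. w = True#False#w' \<and> ltl w' (pow_str [True,False] (Suc m) @ [False]))"
    using Suc.prems(2) unfolding t by (auto simp: ltl_Cons_right)
  then show ?case
  proof
    assume "\<exists>r. w = False#r"
    then show ?thesis by (auto simp: ltl_Cons_Cons)
  next
    assume "\<exists>w'. w = True#False#w' \<and> ltl w' (pow_str [True,False] (Suc m) @ [False])"
    then obtain w' where w': "w = True#False#w'" "ltl w' (pow_str [True,False] (Suc m) @ [False])" by auto
    have "length w' = 2*m+3" using w' Suc.prems(1) by simp
    then have "w' = pow_str [True,False] m @ [False,True,False] \<or> ltl w' (pow_str [True,False] m @ [False,True,False])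
   \<or> w' = pow_str [True,False] m @ [False,True,True]" using Suc.IH w'(2) by blast
    then show ?thesis using w'(1) by (auto simp: ltl_Cons_Cons)
  qed
qed



lemma Pf_pow_Suc: "(Pf^^Suc j) p = (Pf^^j) (Pf p)" by (simp only: funpow_Suc_right comp_def)

lemma Pf_rec: "fst ((Pf^^(j+2)) p) + fst ((Pf^^j) p) = 3 * fst ((Pf^^(j+1)) p)"
              "snd ((Pf^^(j+2)) p) + snd ((Pf^^j) p) = 3 * snd ((Pf^^(j+1)) p)"
proof -
  obtain x y where q: "(Pf^^j) p = (x,y)" by (cases "(Pf^^j) p")
  have a: "(Pf^^(j+2)) p = Pf (Pf (x,y))" "(Pf^^(j+1)) p = Pf (x,y)" using q by simp_all
  show "fst ((Pf^^(j+2)) p) + fst ((Pf^^j) p) = 3 * fst ((Pf^^(j+1)) p)" unfolding a q by simp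
  show "snd ((Pf^^(j+2)) p) + snd ((Pf^^j) p) = 3 * snd ((Pf^^(j+1)) p)" unfolding a q by simp
qed

lemma rec_mono: fixes u :: "nat \<Rightarrow> int"
  assumes r: "\<And>j. u (j+2) + u j = 3 * u (j+1)" and b: "u 0 \<le> u 1" and p: "0 \<le> u 0"
  shows "u 0 \<le> u j \<and> u j \<le> u (Suc j)"
proof (induction j)
  case 0 then show ?case using b by simp
next
  case (Suc j)
  have "u (j+2) + u j = 3 * u (j+1)" by (rule r)
  then show ?case using Suc p by simp
qed

lemma rec_ge0: fixes u :: "nat \<Rightarrow> int"
  assumes r: "\<And>j. u (j+2) + u j = 3 * u (j+1)" and b: "u 0 \<le> u 1" and p: "0 \<le> u 0"
  shows "u 0 \<le> u j"
  using rec_mono[OF r b p] by blast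

definition uu :: "nat \<Rightarrow> int" where
  "uu j = int (fst ((Pf^^j) (37,60)) + snd ((Pf^^j) (37,60))) - int (8 * fst ((Pf^^j) (4,11)) + 5 * snd ((Pf^^j) (4,11)))"

lemma uu_rec: "uu (j+2) + uu j = 3 * uu (j+1)"
  using Pf_rec[of j "(37,60)"] Pf_rec[of j "(4,11)"] unfolding uu_def by simp

lemma gap1: "8 * fst ((Pf^^j) (4,11)) + 5 * snd ((Pf^^j) (4,11)) \<le> fst ((Pf^^j) (37,60)) + snd ((Pf^^j) (37,60))"
proof -
  have "uu j \<ge> 0"
  proof (cases "j < 2")
    case True
    then have "j = 0 \<or> j = 1" by auto
    then show ?thesis by (auto simp: uu_def)
  next
    case False
    then obtain i where i: "j = i + 2" by (metis add.commute le_Suc_ex not_less)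
    let ?v = "\<lambda>i. uu (i+2)"
    have r: "\<And>i. ?v (i+2) + ?v i = 3 * ?v (i+1)" using uu_rec by (simp add: algebra_simps)
    have b: "?v 0 \<le> ?v 1" by (simp add: uu_def eval_nat_numeral)
    have "?v 0 \<le> ?v i" by (rule rec_ge0[OF r b]) (simp add: uu_def eval_nat_numeral)
    moreover have "?v 0 = 2" by (simp add: uu_def eval_nat_numeral)
    ultimately show ?thesis using i by simp
  qed
  then show ?thesis unfolding uu_def by simp
qed

definition hh :: "nat \<Rightarrow> int" where
  "hh j = int (3 * fst ((Pf^^j) (15,26)) + 2 * snd ((Pf^^j) (15,26))) - int (fst ((Pf^^j) (37,60)) + snd ((Pf^^j) (37,60)))"

lemma hh_rec: "hh (j+2) + hh j = 3 * hh (j+1)"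
  using Pf_rec[of j "(37,60)"] Pf_rec[of j "(15,26)"] unfolding hh_def by simp

lemma gap2: "j \<ge> 1 \<Longrightarrow> fst ((Pf^^j) (37,60)) + snd ((Pf^^j) (37,60)) < 3 * fst ((Pf^^j) (15,26)) + 2 * snd ((Pf^^j) (15,26))"
proof -
  assume "j \<ge> 1"
  then obtain i where i: "j = i + 1" by (metis add.commute le_Suc_ex)
  let ?v = "\<lambda>i. hh (i+1)"
  have r: "\<And>i. ?v (i+2) + ?v i = 3 * ?v (i+1)" using hh_rec by (simp add: algebra_simps)
  have b: "?v 0 \<le> ?v 1" by (simp add: hh_def eval_nat_numeral)
  have "?v 0 \<le> ?v i" by (rule rec_ge0[OF r b]) (simp add: hh_def eval_nat_numeral)
  moreover have "?v 0 = 3" by (simp add: hh_def eval_nat_numeral)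
  ultimately have "hh j > 0" using i by simp
  then show ?thesis unfolding hh_def by simp
qed

lemma Pf_lt: "fst ((Pf^^j) (4,11)) < snd ((Pf^^j) (4,11))"
proof (induction j)
  case 0 then show ?case by simp
next
  case (Suc j)
  obtain x y where q: "(Pf^^j) (4,11) = (x,y)" by (cases "(Pf^^j) (4,11)")
  then show ?case using Suc by simp
qed



lemma s_bv: "s (bin_val xs) = snd (st xs (0,1))"
  using st_pair[of xs] by (simp add: s_def)

lemma st_u6: "st [True,False,False,True,False,False] (0,1) = (4,11)" by (simp add: numeral_eq_Suc)
lemma s_u6: "s (bin_val ([True,False,False,True,False,False]@w)) = snd (st w (4,11))"
  by (simp only: s_bv st_append st_u6)
lemma st_c4: "st [True,False,False,False] (0,1) = (1,4)" by (simp add: numeral_eq_Suc)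
lemma s_c4: "s (bin_val ([True,False,False,False]@w)) = snd (st w (1,4))"
  by (simp only: s_bv st_append st_c4)

lemma st_FTF: "snd (st (pow_str [True,False] m @ [False,True,False]) p) = 3*fst((Pf^^m) p) + 2*snd((Pf^^m) p)"
proof -
  obtain X Y where q: "(Pf^^m) p = (X,Y)" by (cases "(Pf^^m) p")
  show ?thesis by (simp only: st_append st_pow q) simp
qed

lemma st_FTT: "snd (st (pow_str [True,False] m @ [False,True,True]) p) = fst((Pf^^m) p) + snd((Pf^^m) p)"
proof -
  obtain X Y where q: "(Pf^^m) p = (X,Y)" by (cases "(Pf^^m) p")
  show ?thesis by (simp only: st_append st_pow q) simp
qed

lemma st_F: "snd (st (pow_str [True,False] m @ [False]) p) = fst((Pf^^m) p) + snd((Pf^^m) p)"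
proof -
  obtain X Y where q: "(Pf^^m) p = (X,Y)" by (cases "(Pf^^m) p")
  show ?thesis by (simp only: st_append st_pow q) simp
qed

lemma prefix_cases:
  assumes "ltl xs ([True,False,False,True,False,False] @ t)"
  shows "(\<exists>r. xs = False#r) \<or> (\<exists>r. xs = [True,False,False,False]@r) \<or>
         (\<exists>w. xs = [True,False,False,True,False,False]@w \<and> ltl w t)"
  using assms by (auto simp: ltl_Cons_right)

context
  fixes n :: nat
  assumes n3: "n \<ge> 3"
begin

definition MM :: nat where "MM = snd (st (pow_str [True,False] (n+1) @ [False]) (1,4))"
definition SA :: nat where "SA = snd (st (pow_str [True,False] (n-1) @ [False,True,False]) (4,11))"
definition SB :: nat where "SB = snd (st (pow_str [True,False] n @ [False]) (4,11))"

lemma MM_fb: "MM = fb (2*n+3) + 4 * fb (2*n+4)"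
proof -
  have "MM = fb (2*(n+1)+1) * 1 + fb (2*(n+1)+2) * 4" unfolding MM_def by (rule tB_closed)
  moreover have e: "2*(n+1)+1 = 2*n+3" "2*(n+1)+2 = 2*n+4" by simp_all
  ultimately have "MM = fb (2*n+3) * 1 + fb (2*n+4) * 4" by (simp only:)
  then show ?thesis by (simp only: mult_1_right mult.commute[of "fb (2*n+4)" 4])
qed

lemma K6: "fb (2*n+7) \<le> MM"
  unfolding MM_fb by (simp add: fb.simps(3) eval_nat_numeral)

lemma K1: "length w = 2*n+1 \<Longrightarrow> ltl w (pow_str [True,False] (n-1) @ [False,True,False]) \<Longrightarrow>
   snd (st w (4,11)) \<le> MM"
proof -
  assume l: "length w = 2*n+1" and lt: "ltl w (pow_str [True,False] (n-1) @ [False,True,False])"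
  obtain j where j: "n = j + 2" using n3 by (metis add.commute le_Suc_ex le_trans numeral_le_iff semiring_norm(70) numeral_2_eq_2 Suc_leD eval_nat_numeral(3))
  have l': "length w = 2*j+5" using l j by simp
  have lt': "ltl w (pow_str [True,False] (Suc j) @ [False,True,False])" using lt j by simp
  have "snd (st w (4,11)) \<le> 8*fst((Pf^^j)(4,11)) + 5*snd((Pf^^j)(4,11))"
    by (rule S1[OF _ l' lt']) simp
  also have "\<dots> \<le> fst ((Pf^^j) (37,60)) + snd ((Pf^^j) (37,60))" by (rule gap1)
  also have "\<dots> = MM"
  proof -
    have "n+1 = j+3" using j by simp
    then have "(Pf^^(n+1)) (1,4) = (Pf^^j) ((Pf^^3) (1,4))" by (simp only: funpow_add comp_def)
    moreover have "(Pf^^3) (1,4) = (37,60)" by (simp add: eval_nat_numeral)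
    ultimately show ?thesis unfolding MM_def st_F by simp
  qed
  finally show ?thesis .
qed

lemma K2: "MM < SA"
proof -
  obtain j where j: "n = j + 2" using n3 by (metis add.commute le_Suc_ex le_trans numeral_le_iff semiring_norm(70) numeral_2_eq_2 Suc_leD eval_nat_numeral(3))
  have "n+1 = j+3" using j by simp
  then have "(Pf^^(n+1)) (1,4) = (Pf^^j) ((Pf^^3) (1,4))" by (simp only: funpow_add comp_def)
  moreover have "(Pf^^3) (1,4) = (37,60)" by (simp add: eval_nat_numeral)
  ultimately have m: "MM = fst ((Pf^^j) (37,60)) + snd ((Pf^^j) (37,60))" unfolding MM_def st_F by simp
  have "n-1 = j+1" using j by simp
  then have "(Pf^^(n-1)) (4,11) = (Pf^^j) ((Pf^^1) (4,11))" by (simp only: funpow_add comp_def)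
  moreover have "(Pf^^1) (4,11) = (15,26)" by simp
  ultimately have a: "SA = 3 * fst ((Pf^^j) (15,26)) + 2 * snd ((Pf^^j) (15,26))" unfolding SA_def st_FTF by simp
  have "j \<ge> 1" using j n3 by simp
  then show ?thesis unfolding m a by (rule gap2)
qed

lemma K3: "SA < SB"
proof -
  obtain X Y where q: "(Pf^^(n-1)) (4,11) = (X,Y)" by (cases "(Pf^^(n-1)) (4,11)")
  have "X < Y" using Pf_lt[of "n-1"] q by simp
  have "(Pf^^n) (4,11) = Pf ((Pf^^(n-1)) (4,11))" using n3
    by (metis Suc_diff_1 funpow.simps(2) comp_apply less_le_trans zero_less_numeral)
  then have "(Pf^^n) (4,11) = (X+Y, X+2*Y)" using q by simp
  then have "SB = 2*X + 3*Y" unfolding SB_def st_F by simp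
  moreover have "SA = 3*X+2*Y" unfolding SA_def st_FTF q by simp
  ultimately show ?thesis using \<open>X < Y\<close> by simp
qed

lemma K4: "length w = 2*n+1 \<Longrightarrow> ltl w (pow_str [True,False] n @ [False]) \<Longrightarrow> snd (st w (4,11)) \<le> SA"
proof -
  assume l: "length w = 2*n+1" and lt: "ltl w (pow_str [True,False] n @ [False])"
  have e: "n = Suc (n-1)" using n3 by simp
  have l': "length w = 2*(n-1)+3" using l n3 by simp
  have lt': "ltl w (pow_str [True,False] (Suc (n-1)) @ [False])" using lt e by simp
  from S2dec[OF l' lt'] show ?thesis
  proof (elim disjE)
    assume "w = pow_str [True, False] (n - 1) @ [False, True, False]"
    then show ?thesis unfolding SA_def by simp
  next
    assume "ltl w (pow_str [True, False] (n - 1) @ [False, True, False])"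
    then show ?thesis using K1[OF l] K2 by fastforce
  next
    assume w: "w = pow_str [True, False] (n - 1) @ [False, True, True]"
    show ?thesis unfolding w SA_def st_FTT st_FTF by simp
  qed
qed

lemma K5: "length w = 2*n+1 \<Longrightarrow> ltl (pow_str [True,False] n @ [False]) w \<Longrightarrow> snd (st w (4,11)) \<le> SB"
  unfolding SB_def by (rule S3)

lemma below_bound:
  assumes lt: "length t = 2*n+1" and i: "i < bin_val ([True,False,False,True,False,False] @ t)"
    and K: "\<And>w. length w = 2*n+1 \<Longrightarrow> ltl w t \<Longrightarrow> snd (st w (4,11)) \<le> Kb"
  shows "s i \<le> max MM Kb"
proof -
  let ?v = "[True,False,False,True,False,False] @ t"
  have lv: "length ?v = 2*n+7" using lt by simp
  have "bin_val ?v < 2^(2*n+7)" using bin_val_less[of ?v] unfolding lv .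
  then have "i < 2^(2*n+7)" using i by linarith
  then obtain xs where xs: "length xs = 2*n+7" "bin_val xs = i" using exists_list by blast
  have "ltl xs ?v" using less_ltl[of xs ?v] xs i lv by simp
  from prefix_cases[OF this] show ?thesis
  proof (elim disjE exE conjE)
    fix r assume r: "xs = False#r"
    have lr: "length r = 2*n+6" using r xs by simp
    have "s i = snd (st r (0,1))" using s_bv[of xs] xs r by simp
    also have "\<dots> \<le> max (fb (2*n+6) * 0 + fb (Suc (2*n+6)) * 1) (fb (Suc (2*n+6)) * 0 + fb (2*n+6) * 1)"
      using G_bound[OF lr] by blast
    also have "\<dots> \<le> fb (Suc (2*n+6))"
    proof -
      have "\<And>k. max (fb k * 0 + fb (Suc k) * 1) (fb (Suc k) * 0 + fb k * 1) \<le> fb (Suc k)" using fb_mono by simp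
      then show ?thesis .
    qed
    also have "\<dots> = fb (2*n+7)" by (simp only: add_Suc_right[symmetric] eval_nat_numeral)
    also have "\<dots> \<le> MM" by (rule K6)
    finally show ?thesis by simp
  next
    fix r assume r: "xs = [True,False,False,False]@r"
    have lr: "length r = 2*n+3" using r xs by simp
    have "s i = snd (st r (1,4))" using s_c4[of r] xs r by simp
    also have "\<dots> \<le> max (fb (2*n+3) * 1 + fb (Suc (2*n+3)) * 4) (fb (Suc (2*n+3)) * 1 + fb (2*n+3) * 4)"
      using G_bound[OF lr] by blast
    also have "\<dots> \<le> MM"
    proof -
      have e: "Suc (2*n+3) = 2*n+4" by simp
      show ?thesis unfolding MM_fb e using fb_mono[of "2*n+3", unfolded e] by simp
    qed
    finally show ?thesis by simp
  next
    fix w assume w: "xs = [True,False,False,True,False,False]@w" and lw: "ltl w t"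
    have l: "length w = 2*n+1" using w xs by simp
    have "s i = snd (st w (4,11))" using s_u6[of w] xs w by simp
    also have "\<dots> \<le> Kb" by (rule K[OF l lw])
    finally show ?thesis by simp
  qed
qed

end



theorem mainTheorem18:
  fixes n :: nat
  assumes "n \<ge> 3"
  shows "{v \<in> R. length (bin_rep v) = 2 * n + 7
                 \<and> take 6 (bin_rep v) = [True, False, False, True, False, False]}
       = { bin_val ([True, False, False, True, False, False] @ pow_str [True, False] (n - 1)
                    @ [False, True, False]),
           bin_val ([True, False, False, True, False, False] @ pow_str [True, False] n
                    @ [False]) }"
proof -
  let ?u = "[True, False, False, True, False, False]"
  let ?tA = "pow_str [True,False] (n-1) @ [False,True,False]"
  let ?tB = "pow_str [True,False] n @ [False]"
  let ?A = "bin_val (?u @ ?tA)"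
  let ?B = "bin_val (?u @ ?tB)"
  have n3: "n \<ge> 3" by (rule assms)
  have ltA: "length ?tA = 2*n+1" using assms by simp
  have ltB: "length ?tB = 2*n+1" by simp
  have sA: "s ?A = SA n" by (simp only: s_u6 SA_def[OF n3])
  have sB: "s ?B = SB n" by (simp only: s_u6 SB_def[OF n3])
  have K2: "MM n < SA n" by (rule K2[OF n3])
  have K3: "SA n < SB n" by (rule K3[OF n3])
  have AR: "?A \<in> R"
    unfolding R_def
  proof (intro CollectI allI impI)
    fix i assume i: "i < ?A"
    have "s i \<le> max (MM n) (MM n)" by (rule below_bound[OF n3 ltA i K1[OF n3]])
    then show "s i < s ?A" using K2 sA by simp
  qed
  have BR: "?B \<in> R"
    unfolding R_def
  proof (intro CollectI allI impI)
    fix i assume i: "i < ?B"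
    have "s i \<le> max (MM n) (SA n)" by (rule below_bound[OF n3 ltB i K4[OF n3]])
    then show "s i < s ?B" using K2 K3 sB by simp
  qed
  have repA: "bin_rep ?A = ?u @ ?tA"
  proof -
    have "?u @ ?tA = True # ([False, False, True, False, False] @ ?tA)" by simp
    then show ?thesis using bin_rep_val by metis
  qed
  have repB: "bin_rep ?B = ?u @ ?tB"
  proof -
    have "?u @ ?tB = True # ([False, False, True, False, False] @ ?tB)" by simp
    then show ?thesis using bin_rep_val by metis
  qed
  show ?thesis
  proof (rule set_eqI, rule iffI)
    fix x assume "x \<in> {v \<in> R. length (bin_rep v) = 2 * n + 7 \<and> take 6 (bin_rep v) = ?u}"
    then have xR: "x \<in> R" and lx: "length (bin_rep x) = 2 * n + 7" and tx: "take 6 (bin_rep x) = ?u" by auto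
    define w where "w = drop 6 (bin_rep x)"
    have bs: "bin_rep x = ?u @ w" unfolding w_def using tx append_take_drop_id[of 6 "bin_rep x"] by simp
    have xv: "x = bin_val (?u @ w)" using bin_val_rep[of x] bs by simp
    have lw: "length w = 2*n+1" using lx bs by simp
    have sx: "s x = snd (st w (4,11))" using xv s_u6[of w] by simp
    have rec: "\<And>i. i < x \<Longrightarrow> s i < s x" using xR unfolding R_def by blast
    show "x \<in> {?A, ?B}"
    proof (rule ccontr)
      assume "x \<notin> {?A, ?B}"
      then have wA: "w \<noteq> ?tA" and wB: "w \<noteq> ?tB" using xv by auto
      have "w = ?tA \<or> ltl w ?tA \<or> ltl ?tA w" using ltl_trich[of w ?tA] lw ltA by simp
      then show False
      proof (elim disjE)
        assume "w = ?tA" then show False using wA by simp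
      next
        assume lt: "ltl w ?tA"
        let ?c = "pow_str [True,False] (n+1) @ [False]"
        let ?C = "bin_val ([True,False,False,False] @ ?c)"
        have sC: "s ?C = MM n" by (simp only: s_c4 MM_def[OF n3])
        have "ltl ([True,False,False,False] @ ?c) (?u @ w)" by (simp add: ltl_Cons_Cons)
        moreover have "length ([True,False,False,False] @ ?c) = length (?u @ w)" using lw by simp
        ultimately have "?C < x" using xv ltl_less by simp
        then have "s ?C < s x" by (rule rec)
        moreover have "s x \<le> MM n" using sx K1[OF n3 lw lt] by simp
        ultimately show False using sC by simp
      next
        assume lt: "ltl ?tA w"
        have "ltl (?u @ ?tA) (?u @ w)" using lt ltl_append_same by blast
        then have "?A < x" using xv ltl_less[of "?u @ ?tA" "?u @ w"] lw ltA by simp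
        then have sAx: "s ?A < s x" by (rule rec)
        have "w = ?tB \<or> ltl w ?tB \<or> ltl ?tB w" using ltl_trich[of w ?tB] lw ltB by simp
        then show False
        proof (elim disjE)
          assume "w = ?tB" then show False using wB by simp
        next
          assume "ltl w ?tB"
          then have "s x \<le> SA n" using sx K4[OF n3 lw] by simp
          then show False using sAx sA by simp
        next
          assume lt2: "ltl ?tB w"
          have "ltl (?u @ ?tB) (?u @ w)" using lt2 ltl_append_same by blast
          then have "?B < x" using xv ltl_less[of "?u @ ?tB" "?u @ w"] lw ltB by simp
          then have sBx: "s ?B < s x" by (rule rec)
          have "s x \<le> SB n" using sx K5[OF n3 lw lt2] by simp
          then show False using sBx sB by simp
        qed
      qed
    qed
  next
    fix x assume "x \<in> {?A, ?B}"
    then show "x \<in> {v \<in> R. length (bin_rep v) = 2 * n + 7 \<and> take 6 (bin_rep v) = ?u}"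
    proof
      assume x: "x = ?A"
      show ?thesis unfolding x using AR repA ltA by simp
    next
      assume "x \<in> {?B}"
      then have x: "x = ?B" by simp
      show ?thesis unfolding x using BR repB ltB by simp
    qed
  qed
qed


end
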